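(* Let $k,\ell \in \mathbb{N}$, and let $G$ be an $\ell$-empty ordered graph. If the irreducible block decomposition of $G$ contains a block of order at least $4k\ell$, then $S_n(G) \geqslant F_{n,\ell}$ for each $n \leqslant k$.
   Context: Ordered graphs of order $n$ have vertex set $[n]$ with the natural order. The length of an edge $ij$ is $|i-j|$; $G$ is $\ell$-empty if it has no edges of length at least $\ell$. A pair of vertices $u<v$ separates the edges of $G$ if every edge $ij$ ($i<j$) has $j\leqslant u$ or $v\leqslant i$; $G$ is irreducible if no pair separates its edges. For ordered graphs $G_1,\dots,G_m$, $G_1+\dots+G_m$ places copies of them consecutively from left to right with no edges between copies. Every ordered graph $G$ is uniquely $G=G_1+\dots+G_m$ with each $G_i$ irreducible; this is its irreducible block decomposition. $S_n(G)$ is the number of distinct (non-isomorphic as ordered graphs) induced ordered subgraphs of $G$ of order $n$. $F_{n,\ell}$: $F_{n,\ell}=0$ for $n<0$, $F_{0,\ell}=1$, $F_{n,\ell}=F_{n-1,\ell}+\dots+F_{n-\ell,\ell}$ for $n\geqslant1$. *)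

theory Defs
  imports Main
begin

text \<open>An ordered graph of order n: vertex set {1..n} with the natural order;
  edges stored as pairs (i,j) with 1 \<le> i < j \<le> n.  Two ordered graphs are
  isomorphic (as ordered graphs) iff they are equal in this representation.\<close>

type_synonym ograph = "nat \<times> (nat \<times> nat) set"

definition ord_of :: "ograph \<Rightarrow> nat" where "ord_of G = fst G"
definition edges :: "ograph \<Rightarrow> (nat \<times> nat) set" where "edges G = snd G"

definition wf_ograph :: "ograph \<Rightarrow> bool" where
  "wf_ograph G \<longleftrightarrow> (\<forall>(i,j)\<in>edges G. 1 \<le> i \<and> i < j \<and> j \<le> ord_of G)"

definition l_empty :: "nat \<Rightarrow> ograph \<Rightarrow> bool" where
  "l_empty l G \<longleftrightarrow> (\<forall>(i,j)\<in>edges G. j - i < l)"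

definition separates :: "ograph \<Rightarrow> nat \<Rightarrow> nat \<Rightarrow> bool" where
  "separates G u v \<longleftrightarrow> (\<forall>(i,j)\<in>edges G. j \<le> u \<or> v \<le> i)"

definition irreducible :: "ograph \<Rightarrow> bool" where
  "irreducible G \<longleftrightarrow> \<not> (\<exists>u v. 1 \<le> u \<and> u < v \<and> v \<le> ord_of G \<and> separates G u v)"

definition oplus :: "ograph \<Rightarrow> ograph \<Rightarrow> ograph" where
  "oplus G1 G2 = (ord_of G1 + ord_of G2,
     edges G1 \<union> (\<lambda>(i,j). (i + ord_of G1, j + ord_of G1)) ` edges G2)"

definition osum :: "ograph list \<Rightarrow> ograph" where
  "osum Gs = foldr oplus Gs (0, {})"

definition block_decomposition :: "ograph \<Rightarrow> ograph list \<Rightarrow> bool" where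
  "block_decomposition G Gs \<longleftrightarrow>
     (\<forall>B\<in>set Gs. wf_ograph B \<and> ord_of B \<ge> 1 \<and> irreducible B) \<and> osum Gs = G"

text \<open>Induced ordered subgraph on A \<subseteq> {1..ord_of G}, relabelled order-preservingly to {1..card A}.\<close>
definition induced :: "ograph \<Rightarrow> nat set \<Rightarrow> ograph" where
  "induced G A = (card A,
     {(i,j). 1 \<le> i \<and> i < j \<and> j \<le> card A \<and>
        (sorted_list_of_set A ! (i - 1), sorted_list_of_set A ! (j - 1)) \<in> edges G})"

definition S :: "nat \<Rightarrow> ograph \<Rightarrow> nat" where
  "S n G = card {induced G A | A. A \<subseteq> {1..ord_of G} \<and> card A = n}"

fun F :: "nat \<Rightarrow> nat \<Rightarrow> nat" where
  "F 0 l = 1"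
| "F (Suc n) l = (\<Sum>i\<in>{1..min l (Suc n)}. F (Suc n - i) l)"

end

theory Submission
  imports Defs
begin


lemma sl_append:
  fixes T A :: "nat set"
  assumes "finite T" "finite A" "\<forall>x\<in>T. \<forall>y\<in>A. x < y"
  shows "sorted_list_of_set (T \<union> A) = sorted_list_of_set T @ sorted_list_of_set A"
proof -
  let ?l = "sorted_list_of_set T @ sorted_list_of_set A"
  have "sorted_wrt (<) ?l" using assms
    by (auto simp: sorted_wrt_append)
  moreover have "set ?l = T \<union> A" using assms by simp
  moreover have "length ?l = card (T \<union> A)"
  proof -
    have "T \<inter> A = {}" using assms by auto
    then show ?thesis using assms by (simp add: card_Un_disjoint)
  qed
  ultimately show ?thesis using sorted_list_of_set_unique[of "T \<union> A" ?l] assms by blast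
qed

lemma sl_sorted: "sorted_wrt (<) (sorted_list_of_set (X::nat set))"
  by simp

lemma sl_nth_less:
  fixes X :: "nat set"
  assumes "i < j" "j < card X"
  shows "sorted_list_of_set X ! i < sorted_list_of_set X ! j"
  using sorted_wrt_nth_less[OF sl_sorted[of X], of i j] assms by simp

lemma sl_nth_le_iff:
  fixes X :: "nat set"
  assumes "i < card X" "j < card X"
  shows "sorted_list_of_set X ! i \<le> sorted_list_of_set X ! j \<longleftrightarrow> i \<le> j"
  using sl_nth_less[of i j X] sl_nth_less[of j i X] assms
  by (metis linorder_not_le nat_less_le order.strict_implies_order)

lemma sl_in:
  fixes X :: "nat set"
  assumes "finite X" "i < card X"
  shows "sorted_list_of_set X ! i \<in> X"
  using assms by (metis length_sorted_list_of_set nth_mem set_sorted_list_of_set)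

lemma sl_idx:
  fixes X :: "nat set"
  assumes "finite X" "x \<in> X"
  obtains i where "i < card X" "sorted_list_of_set X ! i = x"
  using assms by (metis in_set_conv_nth length_sorted_list_of_set set_sorted_list_of_set)

definition conn :: "(nat \<times> nat) set \<Rightarrow> nat set \<Rightarrow> bool" where
  "conn E T \<longleftrightarrow> (\<exists>lo hi. lo \<in> T \<and> hi \<in> T \<and> T \<subseteq> {lo..hi} \<and>
     (\<forall>u. lo \<le> u \<longrightarrow> u < hi \<longrightarrow> (\<exists>x\<in>T. \<exists>y\<in>T. (x,y) \<in> E \<and> x \<le> u \<and> u < y)))"

definition fc :: "ograph \<Rightarrow> nat" where
  "fc H = (LEAST u. 1 \<le> u \<and> \<not> (\<exists>i j. (i,j) \<in> edges H \<and> i \<le> u \<and> u < j))"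

definition dropg :: "nat \<Rightarrow> ograph \<Rightarrow> ograph" where
  "dropg a H = (ord_of H - a, {(i - a, j - a) | i j. (i,j) \<in> edges H \<and> a < i})"

lemma split_lemma:
  fixes T A :: "nat set"
  assumes fT: "finite T" and fA: "finite A" and ne: "T \<noteq> {}"
    and sep: "\<forall>x\<in>T. \<forall>y\<in>A. x < y \<and> (x,y) \<notin> edges G"
    and cn: "conn (edges G) T"
  shows "fc (induced G (T \<union> A)) = card T \<and> dropg (card T) (induced G (T \<union> A)) = induced G A"
proof -
  let ?LT = "sorted_list_of_set T" and ?LA = "sorted_list_of_set A"
  define a where "a = card T"
  define b where "b = card A"
  have a1: "1 \<le> a" using ne fT a_def by (simp add: Suc_leI card_gt_0_iff)
  have L: "sorted_list_of_set (T \<union> A) = ?LT @ ?LA" using sl_append fT fA sep by blast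
  have lT: "length ?LT = a" and lA: "length ?LA = b" using a_def b_def by auto
  have cTA: "card (T \<union> A) = a + b"
  proof -
    have "T \<inter> A = {}" using sep by auto
    then show ?thesis using fT fA a_def b_def by (simp add: card_Un_disjoint)
  qed
  have nthL1: "sorted_list_of_set (T \<union> A) ! i = ?LT ! i" if "i < a" for i
    using L that lT by (simp add: nth_append)
  have nthL2: "sorted_list_of_set (T \<union> A) ! (a + i) = ?LA ! i" for i
    using L lT by (simp add: nth_append)
  define H where "H = induced G (T \<union> A)"
  have eH: "edges H = {(i,j). 1 \<le> i \<and> i < j \<and> j \<le> a + b \<and>
        (sorted_list_of_set (T \<union> A) ! (i - 1), sorted_list_of_set (T \<union> A) ! (j - 1)) \<in> edges G}"
    unfolding H_def induced_def edges_def using cTA by simp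
  have eA: "edges (induced G A) = {(i,j). 1 \<le> i \<and> i < j \<and> j \<le> b \<and>
        (?LA ! (i - 1), ?LA ! (j - 1)) \<in> edges G}"
    unfolding induced_def edges_def using b_def by simp
  have oH: "ord_of H = a + b" unfolding H_def induced_def ord_of_def using cTA by simp
  have cut: "\<not> (\<exists>i j. (i,j) \<in> edges H \<and> i \<le> a \<and> a < j)"
  proof
    assume "\<exists>i j. (i,j) \<in> edges H \<and> i \<le> a \<and> a < j"
    then obtain i j where e: "(i,j) \<in> edges H" "i \<le> a" "a < j" by blast
    from e eH have i1: "1 \<le> i" and jb: "j \<le> a + b"
      and ed: "(sorted_list_of_set (T \<union> A) ! (i - 1), sorted_list_of_set (T \<union> A) ! (j - 1)) \<in> edges G"
      by auto
    have x: "sorted_list_of_set (T \<union> A) ! (i - 1) = ?LT ! (i - 1)" using nthL1 i1 e(2) by simp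
    have xT: "?LT ! (i - 1) \<in> T" using sl_in[OF fT] i1 e(2) a_def by simp
    have y: "sorted_list_of_set (T \<union> A) ! (j - 1) = ?LA ! (j - 1 - a)"
      using nthL2[of "j - 1 - a"] e(3) by simp
    have yA: "?LA ! (j - 1 - a) \<in> A" using sl_in[OF fA] e(3) jb b_def by simp
    show False using ed x y xT yA sep by auto
  qed
  have nocut: "\<exists>i j. (i,j) \<in> edges H \<and> i \<le> u \<and> u < j" if u1: "1 \<le> u" and ua: "u < a" for u
  proof -
    obtain lo hi where lh: "lo \<in> T" "hi \<in> T" "T \<subseteq> {lo..hi}"
      and cv: "\<forall>u. lo \<le> u \<longrightarrow> u < hi \<longrightarrow> (\<exists>x\<in>T. \<exists>y\<in>T. (x,y) \<in> edges G \<and> x \<le> u \<and> u < y)"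
      using cn unfolding conn_def by blast
    define v where "v = ?LT ! (u - 1)"
    have vT: "v \<in> T" using sl_in[OF fT, of "u - 1"] ua a_def v_def by simp
    have wT: "?LT ! u \<in> T" using sl_in[OF fT, of u] ua a_def by simp
    have vw: "v < ?LT ! u" using sl_nth_less[of "u - 1" u T] u1 ua a_def v_def by simp
    have "lo \<le> v" using vT lh by auto
    moreover have "v < hi" using vw wT lh by auto
    ultimately obtain x y where xy: "x \<in> T" "y \<in> T" "(x,y) \<in> edges G" "x \<le> v" "v < y"
      using cv by blast
    obtain ix where ix: "ix < a" "?LT ! ix = x" using sl_idx[OF fT xy(1)] a_def by metis
    obtain iy where iy: "iy < a" "?LT ! iy = y" using sl_idx[OF fT xy(2)] a_def by metis
    have "ix \<le> u - 1" using sl_nth_le_iff[of ix T "u - 1"] ix xy(4) v_def a_def ua by simp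
    moreover have "\<not> iy \<le> u - 1" using sl_nth_le_iff[of iy T "u - 1"] iy xy(5) v_def a_def ua by simp
    moreover have "sorted_list_of_set (T \<union> A) ! ix = x" using nthL1 ix by simp
    moreover have "sorted_list_of_set (T \<union> A) ! iy = y" using nthL1 iy by simp
    ultimately have "(ix + 1, iy + 1) \<in> edges H"
      unfolding eH using ix iy xy(3) by simp
    moreover have "ix + 1 \<le> u" "u < iy + 1" using \<open>ix \<le> u - 1\<close> \<open>\<not> iy \<le> u - 1\<close> u1 by auto
    ultimately show ?thesis by blast
  qed
  have "fc H = a"
    unfolding fc_def
  proof (rule Least_equality)
    show "1 \<le> a \<and> \<not> (\<exists>i j. (i, j) \<in> edges H \<and> i \<le> a \<and> a < j)" using a1 cut by simp
  next
    fix y assume "1 \<le> y \<and> \<not> (\<exists>i j. (i, j) \<in> edges H \<and> i \<le> y \<and> y < j)"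
    then show "a \<le> y" using nocut by (meson not_le)
  qed
  moreover have "dropg a H = induced G A"
  proof -
    have o: "ord_of (dropg a H) = ord_of (induced G A)"
      unfolding dropg_def ord_of_def induced_def using oH b_def by (simp add: ord_of_def)
    have "{(i - a, j - a) | i j. (i,j) \<in> edges H \<and> a < i} = edges (induced G A)"
    proof
      show "{(i - a, j - a) | i j. (i,j) \<in> edges H \<and> a < i} \<subseteq> edges (induced G A)"
      proof
        fix p assume "p \<in> {(i - a, j - a) | i j. (i,j) \<in> edges H \<and> a < i}"
        then obtain i j where p: "p = (i - a, j - a)" "(i,j) \<in> edges H" "a < i" by blast
        then have h: "i < j" "j \<le> a + b"
          "(sorted_list_of_set (T \<union> A) ! (i - 1), sorted_list_of_set (T \<union> A) ! (j - 1)) \<in> edges G"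
          using eH by auto
        have "sorted_list_of_set (T \<union> A) ! (i - 1) = ?LA ! (i - a - 1)"
          using nthL2[of "i - a - 1"] p(3) by (simp add: Suc_diff_Suc)
        moreover have "sorted_list_of_set (T \<union> A) ! (j - 1) = ?LA ! (j - a - 1)"
          using nthL2[of "j - a - 1"] p(3) h(1) by (simp add: Suc_diff_Suc)
        ultimately show "p \<in> edges (induced G A)"
          unfolding eA using h p by auto
      qed
    next
      show "edges (induced G A) \<subseteq> {(i - a, j - a) | i j. (i,j) \<in> edges H \<and> a < i}"
      proof
        fix p assume "p \<in> edges (induced G A)"
        then obtain i j where p: "p = (i,j)" "1 \<le> i" "i < j" "j \<le> b"
          "(?LA ! (i - 1), ?LA ! (j - 1)) \<in> edges G"
          unfolding eA by auto
        have "sorted_list_of_set (T \<union> A) ! (i + a - 1) = ?LA ! (i - 1)"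
          using nthL2[of "i - 1"] p(2) by (simp add: add.commute)
        moreover have "sorted_list_of_set (T \<union> A) ! (j + a - 1) = ?LA ! (j - 1)"
          using nthL2[of "j - 1"] p(2,3) by (simp add: add.commute)
        ultimately have "(i + a, j + a) \<in> edges H" unfolding eH using p by simp
        moreover have "p = (i + a - a, j + a - a)" using p by simp
        ultimately show "p \<in> {(i - a, j - a) | i j. (i,j) \<in> edges H \<and> a < i}"
          using p(2) by fastforce
      qed
    qed
    moreover have "induced G A = (ord_of (induced G A), edges (induced G A))"
      by (simp add: ord_of_def edges_def)
    moreover have "dropg a H = (ord_of (dropg a H), {(i - a, j - a) | i j. (i,j) \<in> edges H \<and> a < i})"
      by (simp add: ord_of_def dropg_def)
    ultimately show ?thesis using o by metis
  qed
  ultimately show ?thesis using H_def a_def by simp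
qed



definition comps :: "nat \<Rightarrow> nat \<Rightarrow> nat list set" where
  "comps n l = {xs. sum_list xs = n \<and> (\<forall>x\<in>set xs. 1 \<le> x \<and> x \<le> l)}"

lemma len_le_sum: "(\<forall>x\<in>set xs. 1 \<le> x) \<Longrightarrow> length xs \<le> sum_list (xs::nat list)"
  by (induction xs) auto

lemma comps_finite: "finite (comps n l)"
proof -
  have "comps n l \<subseteq> {xs. set xs \<subseteq> {0..n} \<and> length xs \<le> n}"
    unfolding comps_def using len_le_sum member_le_sum_list by fastforce
  moreover have "finite {xs. set xs \<subseteq> {0..n::nat} \<and> length xs \<le> n}"
    by (rule finite_lists_length_le) simp
  ultimately show ?thesis by (rule finite_subset)
qed

lemma comps_Suc: "comps (Suc n) l = (\<Union>a\<in>{1..min l (Suc n)}. (#) a ` comps (Suc n - a) l)"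
proof
  show "comps (Suc n) l \<subseteq> (\<Union>a\<in>{1..min l (Suc n)}. (#) a ` comps (Suc n - a) l)"
  proof
    fix xs assume xs: "xs \<in> comps (Suc n) l"
    then obtain a ys where "xs = a # ys" unfolding comps_def by (cases xs) auto
    moreover have "ys \<in> comps (Suc n - a) l" "a \<in> {1..min l (Suc n)}"
      using xs \<open>xs = a # ys\<close> unfolding comps_def by auto
    ultimately show "xs \<in> (\<Union>a\<in>{1..min l (Suc n)}. (#) a ` comps (Suc n - a) l)"
      by blast
  qed
next
  show "(\<Union>a\<in>{1..min l (Suc n)}. (#) a ` comps (Suc n - a) l) \<subseteq> comps (Suc n) l"
    unfolding comps_def by auto
qed

lemma comps_card: "card (comps n l) = F n l"
proof (induction n rule: less_induct)
  case (less n)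
  show ?case
  proof (cases n)
    case 0
    have "xs = []" if "xs \<in> comps 0 l" for xs
      using that unfolding comps_def by (cases xs) auto
    then have "comps 0 l = {[]}" unfolding comps_def by auto
    then show ?thesis using 0 by simp
  next
    case (Suc m)
    have "card (comps (Suc m) l) = (\<Sum>a\<in>{1..min l (Suc m)}. card ((#) a ` comps (Suc m - a) l))"
      unfolding comps_Suc
      by (rule card_UN_disjoint) (auto simp: comps_finite)
    also have "\<dots> = (\<Sum>a\<in>{1..min l (Suc m)}. F (Suc m - a) l)"
    proof (rule sum.cong)
      fix a assume a: "a \<in> {1..min l (Suc m)}"
      have "card ((#) a ` comps (Suc m - a) l) = card (comps (Suc m - a) l)"
        by (rule card_image) (simp add: inj_on_def)
      also have "\<dots> = F (Suc m - a) l" using less Suc a by simp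
      finally show "card ((#) a ` comps (Suc m - a) l) = F (Suc m - a) l" .
    qed simp
    finally show ?thesis using Suc by simp
  qed
qed



definition winv :: "(nat \<times> nat) set \<Rightarrow> nat \<Rightarrow> nat \<Rightarrow> nat \<Rightarrow> nat \<Rightarrow> nat set \<Rightarrow> nat \<Rightarrow> nat \<Rightarrow> bool" where
  "winv E l N p c T lo hi \<longleftrightarrow> finite T \<and> card T = c \<and> lo \<in> T \<and> hi \<in> T \<and> T \<subseteq> {lo..hi} \<and>
     (\<forall>u. lo \<le> u \<longrightarrow> u < hi \<longrightarrow> (\<exists>x\<in>T. \<exists>y\<in>T. (x,y) \<in> E \<and> x \<le> u \<and> u < y)) \<and>
     lo \<le> p \<and> p \<le> hi \<and> hi + 2 \<le> lo + c + l \<and> p < lo + l \<and> 1 \<le> lo \<and> hi \<le> N"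

lemma window:
  fixes E :: "(nat \<times> nat) set"
  assumes wfE: "\<forall>(x,y)\<in>E. 1 \<le> x \<and> x < y \<and> y \<le> N"
    and lenE: "\<forall>(x,y)\<in>E. y - x < l"
    and cov: "\<forall>u. s \<le> u \<longrightarrow> u + 1 < s + m \<longrightarrow> (\<exists>x y. (x,y) \<in> E \<and> x \<le> u \<and> u < y)"
    and s1: "1 \<le> s" and sN: "s + m \<le> N + 1" and l1: "1 \<le> l"
    and sp: "s \<le> p" and pa: "p + a \<le> s + m"
  shows "1 \<le> c \<Longrightarrow> c \<le> a \<Longrightarrow> \<exists>T lo hi. winv E l N p c T lo hi"
proof (induction c)
  case 0
  then show ?case by simp
next
  case (Suc c)
  show ?case
  proof (cases "c = 0")
    case True
    have "winv E l N p 1 {p} p p" unfolding winv_def using l1 sp s1 pa sN Suc.prems by auto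
    then show ?thesis using True by auto
  next
    case False
    then obtain T lo hi where w: "winv E l N p c T lo hi" using Suc by auto
    note wd = w[unfolded winv_def]
    have fT: "finite T" and cT: "card T = c" and loT: "lo \<in> T" and hiT: "hi \<in> T"
      and sub: "T \<subseteq> {lo..hi}"
      and cv: "\<forall>u. lo \<le> u \<longrightarrow> u < hi \<longrightarrow> (\<exists>x\<in>T. \<exists>y\<in>T. (x,y) \<in> E \<and> x \<le> u \<and> u < y)"
      and i1: "lo \<le> p" "p \<le> hi" "hi + 2 \<le> lo + c + l" "p < lo + l" "1 \<le> lo" "hi \<le> N"
      using wd by auto
    show ?thesis
    proof (cases "card T < hi - lo + 1")
      case True
      have "\<not> {lo..hi} \<subseteq> T"
      proof
        assume "{lo..hi} \<subseteq> T"
        then have "card {lo..hi} \<le> card T" using fT card_mono by blast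
        then show False using True i1 by simp
      qed
      then obtain z where z: "z \<in> {lo..hi}" "z \<notin> T" by blast
      have a1: "card (insert z T) = Suc c" using fT cT z by simp
      have a2: "\<forall>u. lo \<le> u \<longrightarrow> u < hi \<longrightarrow> (\<exists>x\<in>insert z T. \<exists>y\<in>insert z T. (x,y) \<in> E \<and> x \<le> u \<and> u < y)"
        using cv by blast
      have a3: "insert z T \<subseteq> {lo..hi}" using sub z by blast
      have a4: "hi + 2 \<le> lo + Suc c + l" using i1 by simp
      have "winv E l N p (Suc c) (insert z T) lo hi"
        unfolding winv_def using fT a1 a2 a3 a4 loT hiT i1 by blast
      then show ?thesis by blast
    next
      case False
      have "card T \<le> card {lo..hi}" using card_mono[OF _ sub] by simp
      then have Teq: "T = {lo..hi}"
        using card_subset_eq[OF _ sub] False fT i1 by simp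
      then have chi: "hi = lo + c - 1" using cT loT hiT sub by auto
      have "s \<le> hi" "hi + 1 < s + m" using sp i1 chi Suc.prems pa by auto
      then obtain i j where ij: "(i,j) \<in> E" "i \<le> hi" "hi < j" using cov by blast
      have ij2: "1 \<le> i" "i < j" "j \<le> N" "j - i < l" using ij(1) wfE lenE by auto
      show ?thesis
      proof (cases "lo \<le> i")
        case True
        have iT: "i \<in> T" using Teq True ij by simp
        have a1: "card (insert j T) = Suc c" using fT cT ij Teq by simp
        have a3: "insert j T \<subseteq> {lo..j}" using Teq ij i1 by auto
        have a2: "\<forall>u. lo \<le> u \<longrightarrow> u < j \<longrightarrow> (\<exists>x\<in>insert j T. \<exists>y\<in>insert j T. (x,y) \<in> E \<and> x \<le> u \<and> u < y)"
        proof (intro allI impI)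
          fix u assume u: "lo \<le> u" "u < j"
          show "\<exists>x\<in>insert j T. \<exists>y\<in>insert j T. (x, y) \<in> E \<and> x \<le> u \<and> u < y"
          proof (cases "u < hi")
            case True
            then show ?thesis using cv u by blast
          next
            case False
            then have "i \<le> u" using ij by simp
            then show ?thesis using iT ij u by blast
          qed
        qed
        have a4: "j + 2 \<le> lo + Suc c + l" using ij ij2 chi i1 by linarith
        have a5: "lo \<le> p" "p \<le> j" "p < lo + l" "1 \<le> lo" "j \<le> N" using i1 ij ij2 by auto
        have "winv E l N p (Suc c) (insert j T) lo j"
          unfolding winv_def using fT a1 a2 a3 a4 a5 loT by blast
        then show ?thesis by blast
      next
        case False
        let ?T = "insert i (insert j (T - {hi}))"
        have "card (T - {hi}) = c - 1" using fT cT hiT by simp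
        then have "card ?T = Suc c" using fT False ij Teq \<open>c \<noteq> 0\<close> by auto
        moreover have a3: "?T \<subseteq> {i..j}" using Teq ij False by auto
        moreover have a2: "\<forall>u. i \<le> u \<longrightarrow> u < j \<longrightarrow> (\<exists>x\<in>?T. \<exists>y\<in>?T. (x,y) \<in> E \<and> x \<le> u \<and> u < y)"
          using ij by blast
        moreover have a4: "j + 2 \<le> i + Suc c + l" using ij2 by linarith
        moreover have a5: "i \<le> p" "p \<le> j" "p < i + l" "1 \<le> i" "j \<le> N" using i1 ij ij2 False by auto
        moreover have "finite ?T" using fT by simp
        ultimately have "winv E l N p (Suc c) ?T i j"
          unfolding winv_def by blast
        then show ?thesis by blast
      qed
    qed
  qed
qed



lemma osum_Cons: "osum (g # ys) = oplus g (osum ys)"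
  unfolding osum_def by simp

lemma osum_append:
  "ord_of (osum (xs @ R)) = ord_of (osum xs) + ord_of (osum R) \<and>
   (\<lambda>(i,j). (i + ord_of (osum xs), j + ord_of (osum xs))) ` edges (osum R) \<subseteq> edges (osum (xs @ R))"
proof (induction xs)
  case Nil
  then show ?case by (simp add: osum_def ord_of_def)
next
  case (Cons g xs)
  let ?o = "ord_of (osum xs)"
  have o1: "ord_of (osum ((g # xs) @ R)) = ord_of g + ord_of (osum (xs @ R))"
    by (simp add: osum_Cons oplus_def ord_of_def)
  have o2: "ord_of (osum (g # xs)) = ord_of g + ?o"
    by (simp add: osum_Cons oplus_def ord_of_def)
  have e1: "(\<lambda>(i,j). (i + ord_of g, j + ord_of g)) ` edges (osum (xs @ R)) \<subseteq> edges (osum ((g # xs) @ R))"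
    by (auto simp add: osum_Cons oplus_def edges_def)
  have "(\<lambda>(i,j). (i + ord_of (osum (g # xs)), j + ord_of (osum (g # xs)))) ` edges (osum R)
      \<subseteq> (\<lambda>(i,j). (i + ord_of g, j + ord_of g)) ` ((\<lambda>(i,j). (i + ?o, j + ?o)) ` edges (osum R))"
    unfolding o2
  proof (rule subsetI)
    fix p assume "p \<in> (\<lambda>(i,j). (i + (ord_of g + ?o), j + (ord_of g + ?o))) ` edges (osum R)"
    then obtain i j where p: "p = (i + (ord_of g + ?o), j + (ord_of g + ?o))" "(i,j) \<in> edges (osum R)" by auto
    then have "(i + ?o, j + ?o) \<in> (\<lambda>(i,j). (i + ?o, j + ?o)) ` edges (osum R)" by force
    moreover have "p = (case (i + ?o, j + ?o) of (i,j) \<Rightarrow> (i + ord_of g, j + ord_of g))" using p by simp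
    ultimately show "p \<in> (\<lambda>(i,j). (i + ord_of g, j + ord_of g)) ` ((\<lambda>(i,j). (i + ?o, j + ?o)) ` edges (osum R))"
      by (metis (no_types, lifting) image_eqI)
  qed
  also have "\<dots> \<subseteq> (\<lambda>(i,j). (i + ord_of g, j + ord_of g)) ` edges (osum (xs @ R))"
    using Cons.IH by (intro image_mono) blast
  also have "\<dots> \<subseteq> edges (osum ((g # xs) @ R))" by (rule e1)
  finally show ?case using o1 o2 Cons.IH by simp
qed

lemma block_cov:
  assumes "block_decomposition G Gs" "B \<in> set Gs"
  shows "\<exists>s. 1 \<le> s \<and> s + ord_of B \<le> ord_of G + 1 \<and>
     (\<forall>u. s \<le> u \<longrightarrow> u + 1 < s + ord_of B \<longrightarrow> (\<exists>x y. (x,y) \<in> edges G \<and> x \<le> u \<and> u < y))"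
proof -
  obtain xs ys where Gs: "Gs = xs @ B # ys" using assms(2) split_list by metis
  have irr: "irreducible B" and G: "osum Gs = G" using assms unfolding block_decomposition_def by auto
  let ?o = "ord_of (osum xs)"
  have A: "ord_of G = ?o + ord_of (osum (B # ys))"
     "(\<lambda>(i,j). (i + ?o, j + ?o)) ` edges (osum (B # ys)) \<subseteq> edges G"
    using osum_append[of xs "B # ys"] G Gs by auto
  have B1: "ord_of (osum (B # ys)) = ord_of B + ord_of (osum ys)"
    by (simp add: osum_Cons oplus_def ord_of_def)
  have B2: "edges B \<subseteq> edges (osum (B # ys))"
    by (auto simp add: osum_Cons oplus_def edges_def)
  have "\<exists>x y. (x,y) \<in> edges G \<and> x \<le> u \<and> u < y" if u: "?o + 1 \<le> u" "u + 1 < ?o + 1 + ord_of B" for u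
  proof -
    let ?u = "u - ?o"
    have "\<not> separates B ?u (Suc ?u)" using irr u unfolding irreducible_def by auto
    then obtain i j where ij: "(i,j) \<in> edges B" "\<not> (j \<le> ?u \<or> Suc ?u \<le> i)"
      unfolding separates_def by auto
    have "(i + ?o, j + ?o) \<in> edges G" using A(2) B2 ij(1) by blast
    moreover have "i + ?o \<le> u" "u < j + ?o" using ij(2) u by auto
    ultimately show ?thesis by blast
  qed
  moreover have "?o + 1 + ord_of B \<le> ord_of G + 1" using A B1 by simp
  ultimately show ?thesis by (intro exI[of _ "?o + 1"]) auto
qed



fun Aset :: "(nat \<Rightarrow> nat \<Rightarrow> nat set) \<Rightarrow> nat list \<Rightarrow> nat \<Rightarrow> nat set" where
  "Aset W [] t = {}"
| "Aset W (a # xs) t = W a t \<union> Aset W xs (Suc t)"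

definition good_W :: "ograph \<Rightarrow> nat \<Rightarrow> nat \<Rightarrow> nat \<Rightarrow> (nat \<Rightarrow> nat \<Rightarrow> nat set) \<Rightarrow> bool" where
  "good_W G l k s W \<longleftrightarrow> (\<forall>a t. 1 \<le> a \<longrightarrow> a \<le> l \<longrightarrow> t < k \<longrightarrow>
     finite (W a t) \<and> card (W a t) = a \<and> W a t \<subseteq> {1..ord_of G} \<and> conn (edges G) (W a t) \<and>
     (\<forall>x\<in>W a t. s + l + 4 * l * t < x + l \<and> x + 2 \<le> s + l + 4 * l * t + a + l))"

lemma aset_props:
  assumes gw: "good_W G l k s W"
  shows "(\<forall>x\<in>set xs. 1 \<le> x \<and> x \<le> l) \<Longrightarrow> t + length xs \<le> k \<Longrightarrow>
    finite (Aset W xs t) \<and> card (Aset W xs t) = sum_list xs \<and> Aset W xs t \<subseteq> {1..ord_of G} \<and>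
    (\<forall>y\<in>Aset W xs t. s + l + 4 * l * t < y + l)"
proof (induction xs arbitrary: t)
  case Nil
  then show ?case by simp
next
  case (Cons a xs)
  have IH: "finite (Aset W xs (Suc t)) \<and> card (Aset W xs (Suc t)) = sum_list xs \<and>
      Aset W xs (Suc t) \<subseteq> {1..ord_of G} \<and> (\<forall>y\<in>Aset W xs (Suc t). s + l + 4 * l * Suc t < y + l)"
    using Cons.IH[of "Suc t"] Cons.prems by simp
  have wa: "finite (W a t) \<and> card (W a t) = a \<and> W a t \<subseteq> {1..ord_of G} \<and>
     (\<forall>x\<in>W a t. s + l + 4 * l * t < x + l \<and> x + 2 \<le> s + l + 4 * l * t + a + l)"
    using gw Cons.prems unfolding good_W_def by auto
  have disj: "W a t \<inter> Aset W xs (Suc t) = {}"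
  proof -
    have "x < y" if "x \<in> W a t" "y \<in> Aset W xs (Suc t)" for x y
      using wa IH that Cons.prems by fastforce
    then show ?thesis by blast
  qed
  show ?case using wa IH disj by (auto simp: card_Un_disjoint)
qed

lemma ord_induced: "ord_of (induced G A) = card A"
  by (simp add: induced_def ord_of_def)

lemma aset_inj:
  assumes gw: "good_W G l k s W" and lenE: "\<forall>(x,y)\<in>edges G. y - x < l"
  shows "(\<forall>x\<in>set xs. 1 \<le> x \<and> x \<le> l) \<Longrightarrow> t + length xs \<le> k \<Longrightarrow>
    (\<forall>x\<in>set ys. 1 \<le> x \<and> x \<le> l) \<Longrightarrow> t + length ys \<le> k \<Longrightarrow>
    induced G (Aset W xs t) = induced G (Aset W ys t) \<Longrightarrow> xs = ys"
proof (induction xs arbitrary: ys t)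
  case Nil
  show ?case
  proof (cases ys)
    case (Cons b ys')
    have "card (Aset W ys t) = sum_list ys" using aset_props[OF gw Nil.prems(3,4)] by simp
    moreover have "card (Aset W [] t) = 0" by simp
    ultimately show ?thesis using Nil.prems(5) Cons ord_induced[of G] by (metis add_is_0 not_one_le_zero list.set_intros(1) sum_list.Cons Nil.prems(3))
  qed simp
next
  case (Cons a xs)
  note pr = Cons.prems and IHx = Cons.IH
  show ?case
  proof (cases ys)
    case Nil
    have "card (Aset W (a # xs) t) = sum_list (a # xs)" using aset_props[OF gw pr(1,2)] by simp
    moreover have "card (Aset W [] t) = 0" by simp
    ultimately show ?thesis using pr Nil ord_induced[of G]
      by (metis add_is_0 not_one_le_zero list.set_intros(1) sum_list.Cons)
  next
    case (Cons b ys')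
    have key: "fc (induced G (W c t \<union> Aset W zs (Suc t))) = c \<and>
        dropg c (induced G (W c t \<union> Aset W zs (Suc t))) = induced G (Aset W zs (Suc t))"
      if z: "\<forall>x\<in>set (c # zs). 1 \<le> x \<and> x \<le> l" "t + length (c # zs) \<le> k" for c zs
    proof -
      have wa: "finite (W c t) \<and> card (W c t) = c \<and> conn (edges G) (W c t) \<and>
         (\<forall>x\<in>W c t. s + l + 4 * l * t < x + l \<and> x + 2 \<le> s + l + 4 * l * t + c + l)"
        using gw z unfolding good_W_def by auto
      have P: "finite (Aset W zs (Suc t)) \<and> (\<forall>y\<in>Aset W zs (Suc t). s + l + 4 * l * Suc t < y + l)"
        using aset_props[OF gw, of zs "Suc t"] z by simp
      have ne: "W c t \<noteq> {}" using wa z by auto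
      have sep: "\<forall>x\<in>W c t. \<forall>y\<in>Aset W zs (Suc t). x < y \<and> (x,y) \<notin> edges G"
      proof (intro ballI)
        fix x y assume xy: "x \<in> W c t" "y \<in> Aset W zs (Suc t)"
        have "x + l \<le> y" using wa P xy z by fastforce
        then show "x < y \<and> (x,y) \<notin> edges G" using lenE z by fastforce
      qed
      show ?thesis using split_lemma[of "W c t" "Aset W zs (Suc t)" G] wa P ne sep by simp
    qed
    have k1: "fc (induced G (Aset W (a # xs) t)) = a" using key[of a xs] pr by simp
    have k2: "fc (induced G (Aset W (b # ys') t)) = b" using key[of b ys'] pr Cons by simp
    have ab: "a = b" using k1 k2 pr(5) Cons by simp
    have "induced G (Aset W xs (Suc t)) = induced G (Aset W ys' (Suc t))"
      using key[of a xs] key[of b ys'] pr Cons ab by simp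
    then have "xs = ys'" using IHx[of "Suc t" ys'] pr Cons by simp
    then show ?thesis using ab Cons by simp
  qed
qed



theorem lemma16:
  fixes k l :: nat and G :: ograph
  assumes "wf_ograph G" and "l_empty l G"
    and "block_decomposition G Gs"
    and "\<exists>B\<in>set Gs. ord_of B \<ge> 4 * k * l"
  shows "\<forall>n \<le> k. S n G \<ge> F n l"
proof -
  obtain B where B: "B \<in> set Gs" "ord_of B \<ge> 4 * k * l" using assms(4) by blast
  obtain s where s: "1 \<le> s" "s + ord_of B \<le> ord_of G + 1"
    "\<forall>u. s \<le> u \<longrightarrow> u + 1 < s + ord_of B \<longrightarrow> (\<exists>x y. (x,y) \<in> edges G \<and> x \<le> u \<and> u < y)"
    using block_cov[OF assms(3) B(1)] by blast
  have wfE: "\<forall>(x,y)\<in>edges G. 1 \<le> x \<and> x < y \<and> y \<le> ord_of G"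
    using assms(1) unfolding wf_ograph_def by blast
  have lenE: "\<forall>(x,y)\<in>edges G. y - x < l"
    using assms(2) unfolding l_empty_def by blast
  define W where "W = (\<lambda>a t. SOME T. \<exists>lo hi. winv (edges G) l (ord_of G) (s + l + 4*l*t) a T lo hi)"
  have gw: "good_W G l k s W"
    unfolding good_W_def
  proof (intro allI impI)
    fix a t assume a: "1 \<le> a" "a \<le> l" "t < k"
    have "4*l*(t+1) \<le> 4*l*k" using a by (intro mult_le_mono2) simp
    then have "s + l + 4*l*t + a \<le> s + ord_of B" using a B(2) by (simp add: algebra_simps)
    then have "\<exists>T lo hi. winv (edges G) l (ord_of G) (s + l + 4*l*t) a T lo hi"
      using window[OF wfE lenE s(3) s(1) s(2), of "s + l + 4*l*t" a a] a by simp
    then have "\<exists>lo hi. winv (edges G) l (ord_of G) (s + l + 4*l*t) a (W a t) lo hi"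
      unfolding W_def by (rule someI_ex)
    then obtain lo hi where w: "winv (edges G) l (ord_of G) (s + l + 4*l*t) a (W a t) lo hi" by blast
    note wd = w[unfolded winv_def]
    have c: "conn (edges G) (W a t)" unfolding conn_def using wd by blast
    have b1: "W a t \<subseteq> {1..ord_of G}" using wd by auto
    have b2: "\<forall>x\<in>W a t. s + l + 4 * l * t < x + l \<and> x + 2 \<le> s + l + 4 * l * t + a + l"
    proof
      fix x assume "x \<in> W a t"
      then have "lo \<le> x" "x \<le> hi" using wd by auto
      then show "s + l + 4 * l * t < x + l \<and> x + 2 \<le> s + l + 4 * l * t + a + l" using wd by linarith
    qed
    show "finite (W a t) \<and> card (W a t) = a \<and> W a t \<subseteq> {1..ord_of G} \<and> conn (edges G) (W a t) \<and>
     (\<forall>x\<in>W a t. s + l + 4 * l * t < x + l \<and> x + 2 \<le> s + l + 4 * l * t + a + l)"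
      using wd c b1 b2 by blast
  qed
  show ?thesis
  proof (intro allI impI)
    fix n assume nk: "n \<le> k"
    let ?Big = "{induced G A | A. A \<subseteq> {1..ord_of G} \<and> card A = n}"
    let ?I = "(\<lambda>xs. induced G (Aset W xs 0)) ` comps n l"
    have lenc: "length xs \<le> k" if "xs \<in> comps n l" for xs
      using that len_le_sum[of xs] nk unfolding comps_def by fastforce
    have sub: "?I \<subseteq> ?Big"
    proof
      fix g assume "g \<in> ?I"
      then obtain xs where xs: "xs \<in> comps n l" "g = induced G (Aset W xs 0)" by blast
      have "Aset W xs 0 \<subseteq> {1..ord_of G} \<and> card (Aset W xs 0) = n"
        using aset_props[OF gw, of xs 0] xs lenc unfolding comps_def by auto
      then show "g \<in> ?Big" using xs by blast
    qed
    have fin: "finite ?Big"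
    proof -
      have "?Big \<subseteq> induced G ` Pow {1..ord_of G}" by blast
      then show ?thesis by (rule finite_subset) simp
    qed
    have inj: "inj_on (\<lambda>xs. induced G (Aset W xs 0)) (comps n l)"
    proof (rule inj_onI)
      fix xs ys assume "xs \<in> comps n l" "ys \<in> comps n l"
        "induced G (Aset W xs 0) = induced G (Aset W ys 0)"
      then show "xs = ys" using aset_inj[OF gw lenE, of xs 0 ys] lenc unfolding comps_def by auto
    qed
    have "F n l = card (comps n l)" by (simp add: comps_card)
    also have "\<dots> = card ?I" using inj by (simp add: card_image)
    also have "\<dots> \<le> card ?Big" using sub fin by (rule card_mono[rotated])
    finally show "F n l \<le> S n G" unfolding S_def .
  qed
qed

end
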